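(* Let $G$ be a connected graph with $n\ge 3$ vertices and $e(G)=n+k$ edges, where $1\le k\le 10$. Let $v$ be a vertex of $G$ with $d(v)=1$. If $R(G-v)>\sqrt{n-2}+\frac{2(k+1)}{(n-1)\sqrt{n-2}}$, then $R(G)>\sqrt{n-1}+\frac{2(k+1)}{n\sqrt{n-1}}$.
   Context: All graphs are finite and simple; $e(G)$ is the number of edges and $G-v$ is the graph obtained by deleting the vertex $v$ and its incident edges. For a vertex $u$, $d(u)$ is its degree (in the graph under consideration). The Randić index is $R(G)=\sum_{\{u,v\}\in E(G)} \frac{1}{\sqrt{d(u)d(v)}}$. *)

theory Defs
  imports Complex_Main
begin

definition simple_graph :: "'a set \<Rightarrow> 'a set set \<Rightarrow> bool" where
  "simple_graph V E \<longleftrightarrow> finite V \<and> (\<forall>e\<in>E. e \<subseteq> V \<and> card e = 2)"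

definition adj_rel :: "'a set set \<Rightarrow> ('a \<times> 'a) set" where
  "adj_rel E = {(x, y). {x, y} \<in> E}"

definition connected_graph :: "'a set \<Rightarrow> 'a set set \<Rightarrow> bool" where
  "connected_graph V E \<longleftrightarrow> V \<noteq> {} \<and> (\<forall>u\<in>V. \<forall>w\<in>V. (u, w) \<in> (adj_rel E)\<^sup>*)"

definition degree :: "'a set set \<Rightarrow> 'a \<Rightarrow> nat" where
  "degree E u = card {e \<in> E. u \<in> e}"

definition randic :: "'a set set \<Rightarrow> real" where
  "randic E = (\<Sum>e\<in>E. 1 / sqrt (\<Prod>u\<in>e. real (degree E u)))"

definition del_vert_V :: "'a set \<Rightarrow> 'a \<Rightarrow> 'a set" where
  "del_vert_V V v = V - {v}"

definition del_vert_E :: "'a set set \<Rightarrow> 'a \<Rightarrow> 'a set set" where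
  "del_vert_E E v = {e \<in> E. v \<notin> e}"

end

theory Submission
  imports Defs
begin

lemma key_ineq:
  fixes d p :: real assumes "d \<ge> 2" "p \<ge> 1"
  shows "1/sqrt(d*p) - 1/sqrt((d-1)*p) \<ge> 1/sqrt d - 1/sqrt(d-1)"
proof -
  define a where "a = 1/sqrt d - 1/sqrt(d-1)"
  have sd: "sqrt (d-1) \<le> sqrt d" by simp
  have "sqrt (d-1) > 0" using assms by simp
  hence a0: "a \<le> 0" unfolding a_def using sd by (simp add: frac_le)
  have sp: "sqrt p \<ge> 1" using assms by simp
  have "1/sqrt(d*p) - 1/sqrt((d-1)*p) = a / sqrt p"
    unfolding a_def by (simp add: real_sqrt_mult diff_divide_distrib)
  moreover have "a / sqrt p \<ge> a"
  proof -
    have "a * sqrt p \<le> a * 1" by (rule mult_left_mono_neg[OF sp a0])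
    thus ?thesis using sp by (simp add: le_divide_eq)
  qed
  ultimately show ?thesis unfolding a_def by simp
qed

lemma sqrt_diff_eq:
  fixes x :: real assumes "x \<ge> 1"
  shows "sqrt x - sqrt (x-1) = 1 / (sqrt x + sqrt (x-1))"
proof -
  have pos: "sqrt x + sqrt (x-1) > 0" using assms by (simp add: add_pos_nonneg)
  have "(sqrt x - sqrt (x-1)) * (sqrt x + sqrt (x-1)) = 1"
    using assms by (simp add: algebra_simps)
  thus ?thesis using pos by (simp add: field_simps)
qed

lemma sqrt_diff_mono:
  fixes d m :: real assumes "1 \<le> d" "d \<le> m"
  shows "sqrt m - sqrt (m-1) \<le> sqrt d - sqrt (d-1)"
proof -
  have "sqrt d + sqrt (d-1) \<le> sqrt m + sqrt (m-1)" using assms by (simp add: add_mono)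
  moreover have "sqrt d + sqrt (d-1) > 0" using assms by (simp add: add_pos_nonneg)
  ultimately have "1 / (sqrt m + sqrt (m-1)) \<le> 1 / (sqrt d + sqrt (d-1))"
    by (simp add: frac_le)
  thus ?thesis using assms sqrt_diff_eq[of d] sqrt_diff_eq[of m] by simp
qed


theorem lemma2p10:
  fixes V :: "'a set" and E :: "'a set set" and n k :: nat and v :: 'a
  assumes "simple_graph V E"
    and "connected_graph V E"
    and "card V = n" and "n \<ge> 3"
    and "card E = n + k" and "1 \<le> k" and "k \<le> 10"
    and "v \<in> V" and "degree E v = 1"
    and "randic (del_vert_E E v) >
           sqrt (real n - 2) + 2 * (real k + 1) / ((real n - 1) * sqrt (real n - 2))"
  shows "randic E > sqrt (real n - 1) + 2 * (real k + 1) / (real n * sqrt (real n - 1))"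
proof -
  note sg = assms(1)[unfolded simple_graph_def]
  have finV: "finite V" using sg by blast
  have Esub: "E \<subseteq> Pow V" using sg by blast
  have finE: "finite E" using finite_subset[OF Esub] finV by blast
  have card2: "\<And>e. e \<in> E \<Longrightarrow> card e = 2" using sg by blast
  have eV: "\<And>e. e \<in> E \<Longrightarrow> e \<subseteq> V" using sg by blast
  have c1: "card {e \<in> E. v \<in> e} = 1" using assms(9) unfolding degree_def .
  then obtain e0 where e0: "{e \<in> E. v \<in> e} = {e0}" by (rule card_1_singletonE)
  have e0E: "e0 \<in> E" and ve0: "v \<in> e0" using e0 by auto
  obtain a b where ab: "e0 = {a,b}" "a \<noteq> b" using card2[OF e0E] by (metis card_2_iff)
  have "\<exists>u. e0 = {v,u} \<and> u \<noteq> v"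
  proof (cases "v = a")
    case True thus ?thesis using ab by blast
  next
    case False hence "v = b" using ab ve0 by blast
    thus ?thesis using ab by (intro exI[of _ a]) (auto simp: insert_commute)
  qed
  then obtain u where e0u: "e0 = {v,u}" and uv: "u \<noteq> v" by blast
  have uV: "u \<in> V" using eV[OF e0E] e0u by auto
  define E' where "E' = del_vert_E E v"
  have E'eq: "E' = E - {e0}" unfolding E'_def del_vert_E_def using e0 by blast
  have finE': "finite E'" using finE E'eq by simp
  define d where "d = degree E u"
  have degpos: "\<And>x e. e \<in> E \<Longrightarrow> x \<in> e \<Longrightarrow> degree E x \<ge> 1"
  proof -
    fix x e assume "e \<in> E" "x \<in> e"
    hence "e \<in> {e \<in> E. x \<in> e}" by simp
    moreover have "finite {e \<in> E. x \<in> e}" using finE by simp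
    ultimately have "card {e \<in> E. x \<in> e} \<noteq> 0" by auto
    thus "degree E x \<ge> 1" unfolding degree_def by simp
  qed
  have degE'_other: "\<And>x. x \<noteq> u \<Longrightarrow> x \<noteq> v \<Longrightarrow> degree E' x = degree E x"
  proof -
    fix x assume "x \<noteq> u" "x \<noteq> v"
    hence "{e \<in> E'. x \<in> e} = {e \<in> E. x \<in> e}" using E'eq e0u by auto
    thus "degree E' x = degree E x" unfolding degree_def by simp
  qed
  have Au: "{e \<in> E'. u \<in> e} = {e \<in> E. u \<in> e} - {e0}" using E'eq by auto
  have degE'u: "degree E' u = d - 1"
    unfolding degree_def d_def Au using e0E e0u finE by (simp add: card_Diff_singleton)
  \<comment> \<open>d \<ge> 2 by connectedness\<close>
  have d1: "d \<ge> 1" unfolding d_def using degpos[OF e0E] e0u by simp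
  have d2: "d \<ge> 2"
  proof (rule ccontr)
    assume "\<not> d \<ge> 2"
    hence "d = 1" using d1 by simp
    hence "card {e \<in> E. u \<in> e} = 1" unfolding d_def degree_def by simp
    moreover have "e0 \<in> {e \<in> E. u \<in> e}" using e0E e0u by simp
    ultimately have ue: "{e \<in> E. u \<in> e} = {e0}"
      by (metis card_1_singletonE singletonD)
    have reach: "\<And>w. (v, w) \<in> (adj_rel E)\<^sup>* \<Longrightarrow> w \<in> {u, v}"
    proof -
      fix w assume "(v, w) \<in> (adj_rel E)\<^sup>*"
      thus "w \<in> {u, v}"
      proof (induction rule: rtrancl_induct)
        case base thus ?case by simp
      next
        case (step x y)
        have xy: "{x,y} \<in> E" using step(2) unfolding adj_rel_def by simp
        have cxy: "card {x,y} = 2" using card2[OF xy] .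
        hence "x \<noteq> y" by (cases "x = y") auto
        show ?case
        proof (cases "x = v")
          case True
          hence "{x,y} \<in> {e \<in> E. v \<in> e}" using xy by simp
          hence "{x,y} = {v,u}" using e0 e0u by simp
          thus ?thesis using True \<open>x \<noteq> y\<close> by (auto simp: doubleton_eq_iff)
        next
          case False
          hence xu: "x = u" using step(3) by simp
          hence "{x,y} \<in> {e \<in> E. u \<in> e}" using xy by simp
          hence "{x,y} = {v,u}" using ue e0u by simp
          thus ?thesis using xu \<open>x \<noteq> y\<close> by (auto simp: doubleton_eq_iff)
        qed
      qed
    qed
    have "V \<subseteq> {u, v}" using assms(2) assms(8) reach unfolding connected_graph_def by blast
    hence "card V \<le> card {u,v}" by (simp add: card_mono)
    also have "\<dots> \<le> 2" by (simp add: card_insert_le_m1)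
    finally show False using assms(3,4) by simp
  qed
  have dn: "d \<le> n - 1"
  proof -
    have "{e \<in> E. u \<in> e} \<subseteq> (\<lambda>w. {u,w}) ` (V - {u})"
    proof
      fix e assume he: "e \<in> {e \<in> E. u \<in> e}"
      hence eE: "e \<in> E" and ue: "u \<in> e" by auto
      obtain x y where "e = {x,y}" "x \<noteq> y" using card2[OF eE] by (metis card_2_iff)
      have "\<exists>w. e = {u,w} \<and> w \<noteq> u"
      proof (cases "u = x")
        case True thus ?thesis using \<open>e = {x,y}\<close> \<open>x \<noteq> y\<close> by blast
      next
        case False hence "u = y" using \<open>e = {x,y}\<close> ue by blast
        thus ?thesis using \<open>e = {x,y}\<close> \<open>x \<noteq> y\<close> by (intro exI[of _ x]) (auto simp: insert_commute)
      qed
      then obtain w where "e = {u,w}" "w \<noteq> u" by blast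
      moreover have "w \<in> V" using eV[OF eE] \<open>e = {u,w}\<close> by auto
      ultimately show "e \<in> (\<lambda>w. {u,w}) ` (V - {u})" by auto
    qed
    hence "d \<le> card ((\<lambda>w. {u,w}) ` (V - {u}))" unfolding d_def degree_def
      using finV by (simp add: card_mono)
    also have "\<dots> \<le> card (V - {u})" using finV by (simp add: card_image_le)
    also have "\<dots> = n - 1" using uV finV assms(3) by simp
    finally show ?thesis .
  qed
  define S where "S = (\<lambda>(F::'a set set) (e::'a set). 1 / sqrt (\<Prod>x\<in>e. real (degree F x)))"
  have RE: "randic E = S E e0 + sum (S E) E'"
    unfolding randic_def S_def E'eq using finE e0E by (simp add: sum.remove)
  have RE': "randic E' = sum (S E') E'" unfolding randic_def S_def by simp
  define A where "A = E' \<inter> {e. u \<in> e}"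
  define B where "B = E' - {e. u \<in> e}"
  have sE: "sum (S E) E' = sum (S E) A + sum (S E) B"
    unfolding A_def B_def by (rule sum.Int_Diff[OF finE'])
  have sE': "sum (S E') E' = sum (S E') A + sum (S E') B"
    unfolding A_def B_def by (rule sum.Int_Diff[OF finE'])
  have vnot: "\<And>e. e \<in> E' \<Longrightarrow> v \<notin> e" unfolding E'_def del_vert_E_def by simp
  have SB: "sum (S E) B = sum (S E') B"
  proof (rule sum.cong)
    fix e assume "e \<in> B"
    hence "u \<notin> e" "v \<notin> e" "e \<in> E'" unfolding B_def using vnot by auto
    hence "(\<Prod>x\<in>e. real (degree E x)) = (\<Prod>x\<in>e. real (degree E' x))"
      using degE'_other by (intro prod.cong refl) (metis)
    thus "S E e = S E' e" unfolding S_def by simp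
  qed simp
  define c where "c = 1 / sqrt (real d) - 1 / sqrt (real d - 1)"
  have SA: "\<And>e. e \<in> A \<Longrightarrow> S E e - S E' e \<ge> c"
  proof -
    fix e assume eA: "e \<in> A"
    hence eE': "e \<in> E'" and ue: "u \<in> e" unfolding A_def by auto
    have eE: "e \<in> E" using eE' E'eq by simp
    have fe: "finite e" using card2[OF eE] by (cases "finite e") auto
    define p where "p = (\<Prod>x\<in>e - {u}. real (degree E x))"
    have p1: "p \<ge> 1" unfolding p_def
      by (rule prod_ge_1) (use degpos eE in auto)
    have p': "(\<Prod>x\<in>e - {u}. real (degree E' x)) = p" unfolding p_def
      using degE'_other vnot[OF eE'] by (intro prod.cong) auto
    have PE: "(\<Prod>x\<in>e. real (degree E x)) = real d * p"
      unfolding p_def d_def using fe ue by (simp add: prod.remove)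
    have PE': "(\<Prod>x\<in>e. real (degree E' x)) = (real d - 1) * p"
      using fe ue degE'u d2 p' by (simp add: prod.remove of_nat_diff)
    have "S E e - S E' e = 1/sqrt(real d*p) - 1/sqrt((real d-1)*p)"
      unfolding S_def PE PE' by simp
    also have "\<dots> \<ge> c" unfolding c_def using key_ineq[OF _ p1, of "real d"] d2 by simp
    finally show "S E e - S E' e \<ge> c" .
  qed
  have "A = {e \<in> E'. u \<in> e}" unfolding A_def by auto
  hence cardA: "card A = d - 1" using degE'u unfolding degree_def by simp
  have "sum (S E) A - sum (S E') A = sum (\<lambda>e. S E e - S E' e) A" by (simp add: sum_subtractf)
  also have "\<dots> \<ge> sum (\<lambda>e. c) A" by (rule sum_mono) (rule SA)
  finally have sumA: "sum (S E) A - sum (S E') A \<ge> (real d - 1) * c"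
    using cardA d2 by (simp add: of_nat_diff)
  have Se0: "S E e0 = 1 / sqrt (real d)"
    unfolding S_def e0u d_def using uv assms(9) by simp
  have "randic E - randic E' = S E e0 + (sum (S E) A - sum (S E') A)"
    using RE RE' sE sE' SB by simp
  hence diff: "randic E - randic E' \<ge> 1 / sqrt (real d) + (real d - 1) * c"
    using Se0 sumA by simp
  have dd: "1 / sqrt (real d) + (real d - 1) * c = sqrt (real d) - sqrt (real d - 1)"
  proof -
    have a: "real d / sqrt (real d) = sqrt (real d)" using d2 by (simp add: real_div_sqrt)
    have b: "(real d - 1) / sqrt (real d - 1) = sqrt (real d - 1)" using d2 by (simp add: real_div_sqrt)
    have "1 / sqrt (real d) + (real d - 1) * c
        = (1 + (real d - 1)) / sqrt (real d) - (real d - 1) / sqrt (real d - 1)"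
      unfolding c_def by (simp add: algebra_simps add_divide_distrib[symmetric] diff_divide_distrib)
    thus ?thesis using a b by simp
  qed
  have mono: "sqrt (real n - 1) - sqrt (real n - 2) \<le> sqrt (real d) - sqrt (real d - 1)"
    using sqrt_diff_mono[of "real d" "real n - 1"] d2 dn assms(4) by (simp add: of_nat_diff)
  have "randic E \<ge> randic E' + sqrt (real n - 1) - sqrt (real n - 2)"
    using diff dd mono by simp
  moreover have "2 * (real k + 1) / ((real n - 1) * sqrt (real n - 2))
      > 2 * (real k + 1) / (real n * sqrt (real n - 1))"
  proof -
    have p: "(real n - 1) * sqrt (real n - 2) > 0" using assms(4) by simp
    have "(real n - 1) * sqrt (real n - 2) < real n * sqrt (real n - 1)"
    proof -
      have "(real n - 1) * sqrt (real n - 2) < real n * sqrt (real n - 2)"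
        using assms(4) by simp
      also have "\<dots> \<le> real n * sqrt (real n - 1)" by (simp add: mult_left_mono)
      finally show ?thesis .
    qed
    moreover have "2 * (real k + 1) > 0" by simp
    ultimately show ?thesis using p by (simp add: divide_strict_left_mono mult_pos_pos)
  qed
  ultimately show ?thesis using assms(10) unfolding E'_def by simp
qed

end
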